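(* Let $\Lambda>1$ and let $(v_1,v_2)$ be a solution with positive components of \[ -v_1''+v_1^3-v_1+\Lambda v_2^2v_1=0,\qquad -v_2''+v_2^3-v_2+\Lambda v_1^2v_2=0,\qquad z\in\mathbb{R}, \] \[ (v_1,v_2)\to(0,1)\ \text{as } z\to-\infty,\qquad (v_1,v_2)\to(1,0)\ \text{as } z\to+\infty. \] Then $v_1'>0$ on $\mathbb{R}$ implies $v_2'<0$ on $\mathbb{R}$, and conversely $v_2'<0$ on $\mathbb{R}$ implies $v_1'>0$ on $\mathbb{R}$. *)

theory Defs
  imports "HOL-Analysis.Analysis"
begin

end

theory Submission
  imports Defs
begin

lemma dir1:
  fixes L :: real and u1 u2 u1' u2' u2'' :: "real \<Rightarrow> real"
  assumes L: "L > 0"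
   and d1: "\<And>z. (u1 has_real_derivative u1' z) (at z)"
   and d2: "\<And>z. (u2 has_real_derivative u2' z) (at z)"
   and d2': "\<And>z. (u2' has_real_derivative u2'' z) (at z)"
   and ode: "\<And>z. - u2'' z + u2 z ^ 3 - u2 z + L * u1 z ^ 2 * u2 z = 0"
   and p1: "\<And>z. u1 z > 0" and p2: "\<And>z. u2 z > 0"
   and lb: "(u2 \<longlongrightarrow> 1) at_bot" and lt: "(u2 \<longlongrightarrow> 0) at_top"
   and m1: "\<And>z. u1' z > 0"
  shows "u2' z0 < 0"
proof (rule ccontr)
  assume "\<not> u2' z0 < 0" hence z0: "u2' z0 \<ge> 0" by simp
  define phi where "phi = (\<lambda>z. u2' z / u2 z)"
  define N where "N = (\<lambda>z. u2'' z * u2 z - u2' z ^ 2)"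
  have e2: "u2'' = (\<lambda>z. u2 z ^ 3 - u2 z + L * u1 z ^ 2 * u2 z)"
    using ode by (auto simp: fun_eq_iff) (smt (verit) ode)
  have dN: "(N has_real_derivative 2 * u2 z ^ 2 * (u2 z * u2' z + L * u1 z * u1' z)) (at z)" for z
  proof -
    have "((\<lambda>z. (u2 z ^ 3 - u2 z + L * u1 z ^ 2 * u2 z) * u2 z - u2' z ^ 2) has_real_derivative
       ((3 * u2 z ^ 2 * u2' z - u2' z + L * (2 * u1 z * u1' z * u2 z + u1 z ^ 2 * u2' z)) * u2 z
        + (u2 z ^ 3 - u2 z + L * u1 z ^ 2 * u2 z) * u2' z - 2 * u2' z * u2'' z)) (at z)"
      apply (rule derivative_eq_intros d1 d2 d2' refl | simp)+
      by (simp add: algebra_simps)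
    moreover have "N = (\<lambda>z. (u2 z ^ 3 - u2 z + L * u1 z ^ 2 * u2 z) * u2 z - u2' z ^ 2)"
      unfolding N_def by (subst e2) simp
    ultimately show ?thesis
      by (simp add: e2 power2_eq_square power3_eq_cube algebra_simps)
  qed
  have dphi: "(phi has_real_derivative N z / u2 z ^ 2) (at z)" for z
  proof -
    have "u2 z \<noteq> 0" using p2[of z] by simp
    have "(phi has_real_derivative (u2'' z * u2 z - u2' z * u2' z) / (u2 z * u2 z)) (at z)"
      unfolding phi_def by (rule derivative_eq_intros d2 d2' refl | simp add: \<open>u2 z \<noteq> 0\<close>)+
    thus ?thesis by (simp add: N_def power2_eq_square)
  qed
  have cphi: "continuous_on S phi" for S
    using dphi by (meson DERIV_isCont continuous_at_imp_continuous_on)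
  have Npos: "0 < 2 * u2 z ^ 2 * (u2 z * u2' z + L * u1 z * u1' z)" if "u2' z \<ge> 0" for z
    using p1[of z] p2[of z] m1[of z] L that by (simp add: add_nonneg_pos)
  have phis: "phi z \<ge> 0 \<longleftrightarrow> u2' z \<ge> 0" for z
    using p2[of z] by (simp add: phi_def zero_le_divide_iff)
  have incr: "phi a < phi b" if "a < b" "\<And>x. a < x \<Longrightarrow> x < b \<Longrightarrow> N x > 0" for a b
    using that(1) apply (rule DERIV_pos_imp_increasing_open)
    using dphi that(2) p2 apply (meson divide_pos_pos zero_less_power)
    by (rule cphi)
  have decr: "phi a > phi b" if ab: "a < b" and hN: "\<And>x. a < x \<Longrightarrow> x < b \<Longrightarrow> N x < 0" for a b
  proof -
    have "(\<lambda>x. - phi x) a < (\<lambda>x. - phi x) b"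
      using ab apply (rule DERIV_pos_imp_increasing_open)
      subgoal for x
        apply (rule exI[of _ "- (N x / u2 x ^ 2)"])
        using dphi[of x] hN[of x] p2[of x]
        by (auto intro: derivative_eq_intros simp: divide_neg_pos)
      using cphi by (intro continuous_intros)
    thus ?thesis by simp
  qed
  have Lplus: "\<exists>t. m < t \<and> t < m + \<delta> \<and> phi t > phi m"
    if h: "N m \<ge> 0" "u2' m \<ge> 0" "\<delta> > 0" for m \<delta>
  proof -
    obtain d where d: "d > 0" "\<forall>h>0. h < d \<longrightarrow> N m < N (m + h)"
      using DERIV_pos_inc_right[OF dN Npos[OF h(2)]] by blast
    define t where "t = m + min d \<delta> / 2"
    have "phi m < phi t"
    proof (rule incr)
      show "m < t" using d that by (simp add: t_def)
      fix x assume "m < x" "x < t"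
      hence "N m < N (m + (x - m))" using d(2)[rule_format, of "x - m"] by (auto simp: t_def)
      thus "N x > 0" using that(1) by simp
    qed
    moreover have "t < m + \<delta>" "m < t" using d that by (auto simp: t_def)
    ultimately show ?thesis by blast
  qed
  have Lminus: "\<exists>t. m - \<delta> < t \<and> t < m \<and> phi t > phi m \<and> N t < 0"
    if h: "N m \<le> 0" "u2' m \<ge> 0" "\<delta> > 0" for m \<delta>
  proof -
    obtain d where d: "d > 0" "\<forall>h>0. h < d \<longrightarrow> N (m - h) < N m"
      using DERIV_pos_inc_left[OF dN Npos[OF h(2)]] by blast
    define t where "t = m - min d \<delta> / 2"
    have "phi t > phi m"
    proof (rule decr)
      show "t < m" using d that by (simp add: t_def)
      fix x assume "t < x" "x < m"
      hence "N (m - (m - x)) < N m" using d(2)[rule_format, of "m - x"] by (auto simp: t_def)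
      thus "N x < 0" using that(1) by simp
    qed
    moreover have "N t < 0" using d(2)[rule_format, of "min d \<delta> / 2"] d(1) h
      by (simp add: t_def) (smt (verit))
    moreover have "m - \<delta> < t" "t < m" using d that by (auto simp: t_def)
    ultimately show ?thesis by blast
  qed
  have locmax: "N m = 0" if h: "a < m" "m < b" "\<forall>x\<in>{a..b}. phi x \<le> phi m" for a b m
  proof -
    have "N m / u2 m ^ 2 = 0"
      apply (rule DERIV_local_max[OF dphi, of "min (m - a) (b - m)"])
      using h apply simp
      apply (intro allI impI)
      subgoal for y
        using h by (simp add: abs_less_iff)
      done
    thus ?thesis using p2[of m] by simp
  qed
  have right: "phi z \<ge> phi a" if h: "phi a \<ge> 0" "N a \<ge> 0" "z \<ge> a" for a z
  proof (rule ccontr)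
    assume nz: "\<not> phi z \<ge> phi a"
    have "a \<noteq> z" using nz by auto
    hence az: "a < z" using h(3) by linarith
    have "\<exists>m\<in>{a..z}. \<forall>x\<in>{a..z}. phi x \<le> phi m"
      by (rule continuous_attains_sup) (use az cphi in auto)
    then obtain m where m: "m \<in> {a..z}" "\<forall>x\<in>{a..z}. phi x \<le> phi m" by blast
    have pm: "phi m \<ge> phi a" using m(2)[rule_format, of a] az by simp
    hence "phi m \<ge> 0" using h(1) by linarith
    hence um: "u2' m \<ge> 0" using phis[of m] by blast
    have "m \<noteq> z" using pm nz by auto
    show False
    proof (cases "m = a")
      case True
      then obtain t where "a < t" "t < a + (z - a)" "phi t > phi a"
        using Lplus[of a "z - a"] h az um by auto
      thus False using m(2)[rule_format, of t] True by auto
    next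
      case False
      hence "a < m" "m < z" using m \<open>m \<noteq> z\<close> by auto
      hence "N m = 0" using locmax m by blast
      then obtain t where "m - (m - a) < t" "t < m" "phi t > phi m"
        using Lminus[of m "m - a"] um \<open>a < m\<close> by auto
      thus False using m(2)[rule_format, of t] \<open>m < z\<close> \<open>a < m\<close> by auto
    qed
  qed
  have left: "phi z \<ge> phi a" if h: "phi a \<ge> 0" "N a \<le> 0" "z \<le> a" for a z
  proof (rule ccontr)
    assume nz: "\<not> phi z \<ge> phi a"
    have "a \<noteq> z" using nz by auto
    hence az: "z < a" using h(3) by linarith
    have "\<exists>m\<in>{z..a}. \<forall>x\<in>{z..a}. phi x \<le> phi m"
      by (rule continuous_attains_sup) (use az cphi in auto)
    then obtain m where m: "m \<in> {z..a}" "\<forall>x\<in>{z..a}. phi x \<le> phi m" by blast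
    have pm: "phi m \<ge> phi a" using m(2)[rule_format, of a] az by simp
    hence "phi m \<ge> 0" using h(1) by linarith
    hence um: "u2' m \<ge> 0" using phis[of m] by blast
    have "m \<noteq> z" using pm nz by auto
    show False
    proof (cases "m = a")
      case True
      then obtain t where "a - (a - z) < t" "t < a" "phi t > phi a"
        using Lminus[of a "a - z"] h az um by auto
      thus False using m(2)[rule_format, of t] True by auto
    next
      case False
      hence "z < m" "m < a" using m \<open>m \<noteq> z\<close> by auto
      hence "N m = 0" using locmax m by blast
      then obtain t where "m - (m - z) < t" "t < m" "phi t > phi m"
        using Lminus[of m "m - z"] um \<open>z < m\<close> by auto
      thus False using m(2)[rule_format, of t] \<open>m < a\<close> \<open>z < m\<close> by auto
    qed
  qed
  have cu2: "continuous_on S u2" for S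
    using d2 by (meson DERIV_isCont continuous_at_imp_continuous_on)
  have phi0: "phi z0 \<ge> 0" using phis z0 by simp
  show False
  proof (cases "N z0 \<ge> 0")
    case True
    have "u2 z \<ge> u2 z0" if "z \<ge> z0" for z
    proof (rule DERIV_nonneg_imp_increasing_open[OF that])
      fix x assume "z0 < x" "x < z"
      hence "phi x \<ge> 0" using right[OF phi0 True, of x] phi0 by auto
      thus "\<exists>y. (u2 has_real_derivative y) (at x) \<and> 0 \<le> y" using d2 phis by blast
    qed (rule cu2)
    moreover have "eventually (\<lambda>z. u2 z < u2 z0) at_top"
      using order_tendstoD(2)[OF lt p2[of z0]] .
    then obtain N0 where "\<forall>z\<ge>N0. u2 z < u2 z0" by (auto simp: eventually_at_top_linorder)
    ultimately show False by (metis max.cobounded1 max.cobounded2 not_le)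
  next
    case False
    then obtain t where t: "t < z0" "phi t > phi z0" "N t < 0"
      using Lminus[of z0 1] z0 by auto
    define c where "c = phi t"
    have c: "c > 0" using t phi0 by (simp add: c_def)
    have phic: "phi z \<ge> c" if "z \<le> t" for z
      using left[of t z] t that phi0 unfolding c_def by auto
    have lnb: "ln (u2 z) - c * z \<le> ln (u2 t) - c * t" if "z \<le> t" for z
    proof (rule DERIV_nonneg_imp_increasing_open[OF that])
      fix x assume "z < x" "x < t"
      hence "phi x - c \<ge> 0" using phic by auto
      moreover have "((\<lambda>x. ln (u2 x) - c * x) has_real_derivative phi x - c) (at x)"
        unfolding phi_def using p2[of x]
        by (auto intro!: derivative_eq_intros d2 simp: field_simps)
      ultimately show "\<exists>y. ((\<lambda>x. ln (u2 x) - c * x) has_real_derivative y) (at x) \<and> 0 \<le> y"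
        by blast
    next
      show "continuous_on {z..t} (\<lambda>x. ln (u2 x) - c * x)"
        using p2 by (intro continuous_intros cu2) (auto simp: less_imp_neq[symmetric])
    qed
    have "exp (-1) < (1::real)" by simp
    hence "eventually (\<lambda>z. u2 z > exp (-1)) at_bot"
      using order_tendstoD(1)[OF lb] by blast
    then obtain N0 where N0: "\<forall>z\<le>N0. u2 z > exp (-1)" by (auto simp: eventually_at_bot_linorder)
    define z where "z = min N0 (min t (t - (ln (u2 t) + 1) / c))"
    have zt: "z \<le> t" "z \<le> N0" "z \<le> t - (ln (u2 t) + 1) / c" unfolding z_def by linarith+
    have "u2 z > exp (-1)" using N0 zt(2) by blast
    hence "ln (exp (-1)) < ln (u2 z)" using p2[of z] by (subst ln_less_cancel_iff) auto
    hence "-1 < ln (u2 z)" by simp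
    moreover have "ln (u2 z) \<le> ln (u2 t) - c * (t - z)" using lnb[OF zt(1)] by (simp add: algebra_simps)
    moreover have "(ln (u2 t) + 1) / c \<le> t - z" using zt(3) by linarith
    hence "ln (u2 t) + 1 \<le> c * (t - z)" using c by (simp add: pos_divide_le_eq mult.commute)
    ultimately show False by linarith
  qed
qed
theorem lemma7p1:
  fixes \<Lambda> :: real
    and v1 v2 v1' v2' v1'' v2'' :: "real \<Rightarrow> real"
  assumes "\<Lambda> > 1"
    and "\<And>z. (v1 has_real_derivative v1' z) (at z)"
    and "\<And>z. (v2 has_real_derivative v2' z) (at z)"
    and "\<And>z. (v1' has_real_derivative v1'' z) (at z)"
    and "\<And>z. (v2' has_real_derivative v2'' z) (at z)"
    and "\<And>z. - v1'' z + v1 z ^ 3 - v1 z + \<Lambda> * v2 z ^ 2 * v1 z = 0"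
    and "\<And>z. - v2'' z + v2 z ^ 3 - v2 z + \<Lambda> * v1 z ^ 2 * v2 z = 0"
    and "\<And>z. v1 z > 0" and "\<And>z. v2 z > 0"
    and "(v1 \<longlongrightarrow> 0) at_bot" and "(v2 \<longlongrightarrow> 1) at_bot"
    and "(v1 \<longlongrightarrow> 1) at_top" and "(v2 \<longlongrightarrow> 0) at_top"
  shows "(\<forall>z. v1' z > 0) \<longleftrightarrow> (\<forall>z. v2' z < 0)"
proof
  assume h: "\<forall>z. v1' z > 0"
  show "\<forall>z. v2' z < 0"
  proof
    fix z show "v2' z < 0"
      by (rule dir1[of \<Lambda> v1 v1' v2 v2' v2'']) (use assms h in auto)
  qed
next
  assume h: "\<forall>z. v2' z < 0"
  have dm: "((\<lambda>z. f (- z)) has_real_derivative - f' (- z)) (at z)"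
    if "\<And>z. (f has_real_derivative f' z) (at z)" for f f' :: "real \<Rightarrow> real" and z
    using DERIV_mirror[THEN iffD1, OF that[of "- z"]] by simp
  have "- v1' (- z) < 0" for z
  proof (rule dir1[of \<Lambda> "\<lambda>z. v2 (-z)" "\<lambda>z. - v2' (-z)" "\<lambda>z. v1 (-z)" "\<lambda>z. - v1' (-z)" "\<lambda>z. v1'' (-z)"])
    show "\<Lambda> > 0" using assms(1) by simp
    show "((\<lambda>z. v2 (- z)) has_real_derivative - v2' (- z)) (at z)" for z by (rule dm) (rule assms(3))
    show "((\<lambda>z. v1 (- z)) has_real_derivative - v1' (- z)) (at z)" for z by (rule dm) (rule assms(2))
    show "((\<lambda>z. - v1' (- z)) has_real_derivative v1'' (- z)) (at z)" for z
      using DERIV_minus[OF dm[of v1' v1'', OF assms(4)]] by simp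
    show "- v1'' (- z) + v1 (- z) ^ 3 - v1 (- z) + \<Lambda> * v2 (- z) ^ 2 * v1 (- z) = 0" for z
      by (rule assms(6))
    show "0 < v2 (- z)" "0 < v1 (- z)" for z using assms by auto
    show "((\<lambda>z. v1 (- z)) \<longlongrightarrow> 1) at_bot"
      by (rule filterlim_compose[OF assms(12) filterlim_uminus_at_top_at_bot])
    show "((\<lambda>z. v1 (- z)) \<longlongrightarrow> 0) at_top"
      by (rule filterlim_compose[OF assms(10) filterlim_uminus_at_bot_at_top])
    show "0 < - v2' (- z)" for z using h by simp
  qed
  then show "\<forall>z. v1' z > 0" by (metis minus_minus neg_less_0_iff_less)
qed

end
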